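(* Let $\mathbf{D}$ be a VC-database (a single VC-table $\mathbf{R}$ with global condition $\Phi(\mathbf{R})$) and let $u$ be a statement that is an update $\mathrm{upd}_{\mathit{Set},\theta}$, a delete $\mathrm{del}_{\theta}$, or a constant insert $\mathrm{ins}_{t}$, with its result $u(\mathbf{D})$ on VC-tables defined as in the context. Then $\mathrm{Mod}(u(\mathbf{D}))=u(\mathrm{Mod}(\mathbf{D}))$, where $u(\mathrm{Mod}(\mathbf{D}))=\{u(D)\mid D\in\mathrm{Mod}(\mathbf{D})\}$.
   Context: Fix a universal domain $\mathbb{D}$, a schema $(A_1,\ldots,A_n)$ and a countable set of variables $\Sigma$. Symbolic expressions are built from variables, constants, $+,-,\times,\div$, conditional expressions $\text{if } e_1 \text{ then } e_2 \text{ else } e_3$, comparisons $=,\neq,<,\leq,>,\geq$, $\wedge,\vee,\neg$, $\mathbf{isnull}$, $\mathbf{true}$, $\mathbf{false}$. A VC-table $\mathbf{R}$ is a finite set of tuples $\mathbf{t}$ of arity $n$ whose entries are symbolic expressions, each with a local condition $\phi(\mathbf{R},\mathbf{t})$ (a Boolean symbolic expression); set $\phi(\mathbf{R},\mathbf{t})=\mathbf{false}$ for $\mathbf{t}\notin\mathbf{R}$. It carries a global condition $\Phi(\mathbf{R})$. An assignment $\lambda:\Sigma\to\mathbb{D}$ is extended to expressions homomorphically (operators applied to evaluated arguments, $\lambda(\text{if } e_1 \text{ then } e_2 \text{ else } e_3)=\lambda(e_2)$ if $\lambda(e_1)$ holds and $\lambda(e_3)$ otherwise), to tuples componentwise, and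 to VC-tables by $\lambda(\mathbf{R})=\{\lambda(\mathbf{t})\mid\mathbf{t}\in\mathbf{R}\wedge\lambda(\phi(\mathbf{R},\mathbf{t}))\}$. The set of possible worlds is $\mathrm{Mod}(\mathbf{R})=\{D\mid\exists\lambda:\lambda(\mathbf{R})=D\wedge\lambda(\Phi(\mathbf{R}))\}$. On concrete relations: $\mathrm{upd}_{\mathit{Set},\theta}(R)=\{\mathit{Set}(t)\mid t\in R,\theta(t)\}\cup\{t\mid t\in R,\neg\theta(t)\}$ with $\mathit{Set}=(e_1,\ldots,e_n)$, $\mathrm{del}_{\theta}(R)=\{t\in R\mid\neg\theta(t)\}$, $\mathrm{ins}_t(R)=R\cup\{t\}$. On VC-tables: for $\mathbf{t}$, $\theta(\mathbf{t})$ and $e_i(\mathbf{t})$ denote substituting each attribute reference $A_j$ by $\mathbf{t}.A_j$. Update: for each $\mathbf{t}\in\mathbf{R}$ choose fresh variables $x_{\mathbf{t},A_1},\ldots,x_{\mathbf{t},A_n}$ (distinct, not occurring in $\mathbf{R}$ or its conditions) and let $\mathbf{t}_{new}=(x_{\mathbf{t},A_1},\ldots,x_{\mathbf{t},A_n})$; then $\mathrm{upd}_{\mathit{Set},\theta}(\mathbf{R})=\{\mathbf{t}_{new}\mid\mathbf{t}\in\mathbf{R}\}$ with $\phi(\cdot,\mathbf{t}_{new})=\phi(\mathbf{R},\mathbf{t})$ and global condition $\Phi(\mathbf{R})\wedge\bigwedge_{\mathbf{t}\in\mathbf{R}}\bigwedge_{i=1}^n x_{\mathbf{t},A_i}=(\text{if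 }\theta(\mathbf{t})\text{ then }e_i(\mathbf{t})\text{ else }\mathbf{t}.A_i)$. Delete: $\mathrm{del}_\theta(\mathbf{R})=\mathbf{R}$ with local conditions $\phi(\mathbf{R},\mathbf{t})\wedge\neg\theta(\mathbf{t})$ and global condition $\Phi(\mathbf{R})$. Constant insert: $\mathrm{ins}_t(\mathbf{R})=\mathbf{R}\cup\{t\}$ with $\phi(\cdot,t)=\mathbf{true}$, other local conditions unchanged, global condition $\Phi(\mathbf{R})$. *)

theory Defs
  imports Complex_Main
begin

datatype val = Null | BoolV bool | NumV real

definition holds :: "val \<Rightarrow> bool" where
  "holds v \<longleftrightarrow> v = BoolV True"

type_synonym var = nat

text \<open>Attr j is a reference to attribute A_(j+1) (0-based index).\<close>

datatype expr =
    Var var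
  | Const val
  | Attr nat
  | Plus expr expr | Minus expr expr | Times expr expr | Divide expr expr
  | Ite expr expr expr
  | Eq expr expr | Neq expr expr | Lt expr expr | Le expr expr | Gt expr expr | Ge expr expr
  | And expr expr | Or expr expr | Not expr
  | IsNull expr
  | TrueE | FalseE

fun arith :: "(real \<Rightarrow> real \<Rightarrow> real) \<Rightarrow> val \<Rightarrow> val \<Rightarrow> val" where
  "arith f (NumV x) (NumV y) = NumV (f x y)"
| "arith f _ _ = Null"

fun divv :: "val \<Rightarrow> val \<Rightarrow> val" where
  "divv (NumV x) (NumV y) = (if y = 0 then Null else NumV (x / y))"
| "divv _ _ = Null"

fun cmp :: "(real \<Rightarrow> real \<Rightarrow> bool) \<Rightarrow> val \<Rightarrow> val \<Rightarrow> val" where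
  "cmp f (NumV x) (NumV y) = BoolV (f x y)"
| "cmp f _ _ = BoolV False"

fun eval :: "(var \<Rightarrow> val) \<Rightarrow> val list \<Rightarrow> expr \<Rightarrow> val" where
  "eval asg t (Var x) = asg x"
| "eval asg t (Const c) = c"
| "eval asg t (Attr j) = (if j < length t then t ! j else Null)"
| "eval asg t (Plus a b) = arith (+) (eval asg t a) (eval asg t b)"
| "eval asg t (Minus a b) = arith (-) (eval asg t a) (eval asg t b)"
| "eval asg t (Times a b) = arith (*) (eval asg t a) (eval asg t b)"
| "eval asg t (Divide a b) = divv (eval asg t a) (eval asg t b)"
| "eval asg t (Ite c a b) = (if holds (eval asg t c) then eval asg t a else eval asg t b)"
| "eval asg t (Eq a b) = BoolV (eval asg t a = eval asg t b)"
| "eval asg t (Neq a b) = BoolV (eval asg t a \<noteq> eval asg t b)"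
| "eval asg t (Lt a b) = cmp (\<lambda>x y. x < y) (eval asg t a) (eval asg t b)"
| "eval asg t (Le a b) = cmp (\<lambda>x y. x \<le> y) (eval asg t a) (eval asg t b)"
| "eval asg t (Gt a b) = cmp (\<lambda>x y. x > y) (eval asg t a) (eval asg t b)"
| "eval asg t (Ge a b) = cmp (\<lambda>x y. x \<ge> y) (eval asg t a) (eval asg t b)"
| "eval asg t (And a b) = BoolV (holds (eval asg t a) \<and> holds (eval asg t b))"
| "eval asg t (Or a b) = BoolV (holds (eval asg t a) \<or> holds (eval asg t b))"
| "eval asg t (Not a) = BoolV (\<not> holds (eval asg t a))"
| "eval asg t (IsNull a) = BoolV (eval asg t a = Null)"
| "eval asg t TrueE = BoolV True"
| "eval asg t FalseE = BoolV False"

abbreviation sval :: "(var \<Rightarrow> val) \<Rightarrow> expr \<Rightarrow> val" where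
  "sval asg e \<equiv> eval asg [] e"

definition ceval :: "val list \<Rightarrow> expr \<Rightarrow> val" where
  "ceval t e = eval (\<lambda>_. Null) t e"

fun vars :: "expr \<Rightarrow> var set" where
  "vars (Var x) = {x}"
| "vars (Const c) = {}"
| "vars (Attr j) = {}"
| "vars (Plus a b) = vars a \<union> vars b"
| "vars (Minus a b) = vars a \<union> vars b"
| "vars (Times a b) = vars a \<union> vars b"
| "vars (Divide a b) = vars a \<union> vars b"
| "vars (Ite c a b) = vars c \<union> vars a \<union> vars b"
| "vars (Eq a b) = vars a \<union> vars b"
| "vars (Neq a b) = vars a \<union> vars b"
| "vars (Lt a b) = vars a \<union> vars b"
| "vars (Le a b) = vars a \<union> vars b"
| "vars (Gt a b) = vars a \<union> vars b"
| "vars (Ge a b) = vars a \<union> vars b"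
| "vars (And a b) = vars a \<union> vars b"
| "vars (Or a b) = vars a \<union> vars b"
| "vars (Not a) = vars a"
| "vars (IsNull a) = vars a"
| "vars TrueE = {}"
| "vars FalseE = {}"

fun subst :: "expr list \<Rightarrow> expr \<Rightarrow> expr" where
  "subst t (Var x) = Var x"
| "subst t (Const c) = Const c"
| "subst t (Attr j) = (if j < length t then t ! j else Attr j)"
| "subst t (Plus a b) = Plus (subst t a) (subst t b)"
| "subst t (Minus a b) = Minus (subst t a) (subst t b)"
| "subst t (Times a b) = Times (subst t a) (subst t b)"
| "subst t (Divide a b) = Divide (subst t a) (subst t b)"
| "subst t (Ite c a b) = Ite (subst t c) (subst t a) (subst t b)"
| "subst t (Eq a b) = Eq (subst t a) (subst t b)"
| "subst t (Neq a b) = Neq (subst t a) (subst t b)"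
| "subst t (Lt a b) = Lt (subst t a) (subst t b)"
| "subst t (Le a b) = Le (subst t a) (subst t b)"
| "subst t (Gt a b) = Gt (subst t a) (subst t b)"
| "subst t (Ge a b) = Ge (subst t a) (subst t b)"
| "subst t (And a b) = And (subst t a) (subst t b)"
| "subst t (Or a b) = Or (subst t a) (subst t b)"
| "subst t (Not a) = Not (subst t a)"
| "subst t (IsNull a) = IsNull (subst t a)"
| "subst t TrueE = TrueE"
| "subst t FalseE = FalseE"

definition Ands :: "expr set \<Rightarrow> expr" where
  "Ands S = foldr And (SOME xs. set xs = S) TrueE"

text \<open>A VC-table: a set of symbolic tuples, a local condition for each tuple
  (values outside tups are irrelevant, playing the role of false), and a global condition.\<close>
record vctable =
  tups :: "expr list set"
  lcond :: "expr list \<Rightarrow> expr"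
  gcond :: expr

definition wf_vctable :: "nat \<Rightarrow> vctable \<Rightarrow> bool" where
  "wf_vctable n R \<longleftrightarrow> finite (tups R) \<and> (\<forall>t\<in>tups R. length t = n)"

definition inst :: "(var \<Rightarrow> val) \<Rightarrow> vctable \<Rightarrow> val list set" where
  "inst asg R = {map (sval asg) t | t. t \<in> tups R \<and> holds (sval asg (lcond R t))}"

definition Mod :: "vctable \<Rightarrow> val list set set" where
  "Mod R = {D. \<exists>asg. inst asg R = D \<and> holds (sval asg (gcond R))}"

definition vars_table :: "vctable \<Rightarrow> var set" where
  "vars_table R = (\<Union>t\<in>tups R. (\<Union>e\<in>set t. vars e) \<union> vars (lcond R t)) \<union> vars (gcond R)"

datatype stmt =
    Upd "expr list" expr
  | Del expr
  | Ins "val list"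

definition wf_stmt :: "nat \<Rightarrow> stmt \<Rightarrow> bool" where
  "wf_stmt n u = (case u of
      Upd S \<theta> \<Rightarrow> length S = n \<and> (\<forall>e\<in>set S. vars e = {}) \<and> vars \<theta> = {}
    | Del \<theta> \<Rightarrow> vars \<theta> = {}
    | Ins c \<Rightarrow> length c = n)"

fun apply_rel :: "stmt \<Rightarrow> val list set \<Rightarrow> val list set" where
  "apply_rel (Upd S \<theta>) R =
     {map (ceval t) S | t. t \<in> R \<and> holds (ceval t \<theta>)} \<union> {t \<in> R. \<not> holds (ceval t \<theta>)}"
| "apply_rel (Del \<theta>) R = {t \<in> R. \<not> holds (ceval t \<theta>)}"
| "apply_rel (Ins c) R = insert c R"

text \<open>fr t i is the fresh variable x_{t,A_(i+1)} chosen for tuple t.\<close>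
definition fresh_choice :: "nat \<Rightarrow> vctable \<Rightarrow> (expr list \<Rightarrow> nat \<Rightarrow> var) \<Rightarrow> bool" where
  "fresh_choice n R fr \<longleftrightarrow>
     inj_on (\<lambda>(t, i). fr t i) (tups R \<times> {..<n}) \<and>
     (\<forall>t\<in>tups R. \<forall>i<n. fr t i \<notin> vars_table R)"

definition newt :: "nat \<Rightarrow> (expr list \<Rightarrow> nat \<Rightarrow> var) \<Rightarrow> expr list \<Rightarrow> expr list" where
  "newt n fr t = map (\<lambda>i. Var (fr t i)) [0..<n]"

definition upd_vc :: "(expr list \<Rightarrow> nat \<Rightarrow> var) \<Rightarrow> expr list \<Rightarrow> expr \<Rightarrow> vctable \<Rightarrow> vctable" where
  "upd_vc fr S \<theta> R =
     (let n = length S in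
      \<lparr> tups = newt n fr ` tups R,
        lcond = (\<lambda>s. if \<exists>t\<in>tups R. newt n fr t = s
                      then lcond R (SOME t. t \<in> tups R \<and> newt n fr t = s) else FalseE),
        gcond = And (gcond R)
                  (Ands {Eq (Var (fr t i)) (Ite (subst t \<theta>) (subst t (S ! i)) (t ! i))
                         | t i. t \<in> tups R \<and> i < n}) \<rparr>)"

definition del_vc :: "expr \<Rightarrow> vctable \<Rightarrow> vctable" where
  "del_vc \<theta> R = R \<lparr> lcond := (\<lambda>t. And (lcond R t) (Not (subst t \<theta>))) \<rparr>"

definition ins_vc :: "val list \<Rightarrow> vctable \<Rightarrow> vctable" where
  "ins_vc c R = R \<lparr> tups := insert (map Const c) (tups R),
                    lcond := (lcond R)(map Const c := TrueE) \<rparr>"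

fun apply_vc :: "(expr list \<Rightarrow> nat \<Rightarrow> var) \<Rightarrow> stmt \<Rightarrow> vctable \<Rightarrow> vctable" where
  "apply_vc fr (Upd S \<theta>) R = upd_vc fr S \<theta> R"
| "apply_vc fr (Del \<theta>) R = del_vc \<theta> R"
| "apply_vc fr (Ins c) R = ins_vc c R"

end

theory Submission
  imports Defs
begin

lemma eval_cong: "(\<forall>x\<in>vars e. a x = b x) \<Longrightarrow> eval a tt e = eval b tt e"
  by (induction e) auto

lemma eval_subst: "vars e = {} \<Longrightarrow> eval asg [] (subst t e) = ceval (map (eval asg []) t) e"
  by (induction e) (auto simp: ceval_def)

lemma vars_subst: "vars (subst t e) \<subseteq> vars e \<union> (\<Union>x\<in>set t. vars x)"
  by (induction e) (auto intro: nth_mem)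

lemma holds_foldr: "holds (eval a tt (foldr And xs TrueE)) \<longleftrightarrow> (\<forall>e\<in>set xs. holds (eval a tt e))"
  by (induction xs) (auto simp: holds_def)

lemma holds_Ands: "finite S \<Longrightarrow> holds (eval a tt (Ands S)) \<longleftrightarrow> (\<forall>e\<in>S. holds (eval a tt e))"
proof -
  assume "finite S"
  then have "\<exists>xs. set xs = S" using finite_list by blast
  then have "set (SOME xs. set xs = S) = S" by (rule someI_ex)
  then show ?thesis unfolding Ands_def using holds_foldr by metis
qed

lemma Mod_gen:
  assumes "\<And>asg. inst asg R' = f (inst asg R)" "gcond R' = gcond R"
  shows "Mod R' = f ` Mod R"
  unfolding Mod_def using assms by auto

lemma del_case:
  assumes "vars \<theta> = {}"
  shows "Mod (del_vc \<theta> R) = apply_rel (Del \<theta>) ` Mod R"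
proof (rule Mod_gen)
  fix asg
  show "inst asg (del_vc \<theta> R) = apply_rel (Del \<theta>) (inst asg R)"
    unfolding inst_def del_vc_def using eval_subst[OF assms]
    by (auto simp: holds_def)
qed (simp add: del_vc_def)

lemma ins_case:
  shows "Mod (ins_vc c R) = apply_rel (Ins c) ` Mod R"
proof (rule Mod_gen)
  fix asg
  have m: "map (eval asg []) (map Const c) = c" by (induction c) auto
  show "inst asg (ins_vc c R) = apply_rel (Ins c) (inst asg R)"
    unfolding inst_def ins_vc_def using m
    by (auto simp: holds_def) (metis m)
qed (simp add: ins_vc_def)


lemma newt_inj:
  assumes "wf_vctable n R" "fresh_choice n R fr"
  shows "inj_on (newt n fr) (tups R)"
proof (rule inj_onI)
  fix t1 t2 assume t: "t1 \<in> tups R" "t2 \<in> tups R" "newt n fr t1 = newt n fr t2"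
  show "t1 = t2"
  proof (cases "n = 0")
    case True
    then have "length t1 = 0" "length t2 = 0" using t assms(1) unfolding wf_vctable_def by auto
    then show ?thesis by simp
  next
    case False
    then have "newt n fr t1 ! 0 = Var (fr t1 0)" "newt n fr t2 ! 0 = Var (fr t2 0)"
      unfolding newt_def by auto
    then have "fr t1 0 = fr t2 0" using t by simp
    then have "(t1, 0) = (t2, (0::nat))"
      using assms(2) t False unfolding fresh_choice_def inj_on_def by auto
    then show ?thesis by simp
  qed
qed

definition gfun :: "expr list \<Rightarrow> expr \<Rightarrow> val list \<Rightarrow> val list" where
  "gfun S \<theta> x = (if holds (ceval x \<theta>) then map (ceval x) S else x)"

definition vfun :: "(var \<Rightarrow> val) \<Rightarrow> expr list \<Rightarrow> expr \<Rightarrow> expr list \<Rightarrow> nat \<Rightarrow> val" where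
  "vfun asg S \<theta> t i = (if holds (ceval (map (sval asg) t) \<theta>) then ceval (map (sval asg) t) (S ! i)
     else sval asg (t ! i))"

lemma apply_rel_upd: "apply_rel (Upd S \<theta>) X = gfun S \<theta> ` X"
  unfolding gfun_def by auto

lemma upd_gcond:
  assumes wf: "wf_vctable (length S) R" and ws: "wf_stmt (length S) (Upd S \<theta>)"
  shows "holds (sval asg (gcond (upd_vc fr S \<theta> R))) \<longleftrightarrow>
    holds (sval asg (gcond R)) \<and> (\<forall>t\<in>tups R. \<forall>i<length S. asg (fr t i) = vfun asg S \<theta> t i)"
proof -
  let ?n = "length S"
  let ?E = "{Eq (Var (fr t i)) (Ite (subst t \<theta>) (subst t (S ! i)) (t ! i))
                         | t i. t \<in> tups R \<and> i < ?n}"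
  have E: "?E = (\<lambda>(t,i). Eq (Var (fr t i)) (Ite (subst t \<theta>) (subst t (S ! i)) (t ! i))) ` (tups R \<times> {..<?n})"
    by auto
  have fin: "finite ?E" unfolding E using wf unfolding wf_vctable_def by auto
  have vt: "vars \<theta> = {}" and vS: "\<And>i. i < ?n \<Longrightarrow> vars (S ! i) = {}"
    using ws unfolding wf_stmt_def by auto
  have "holds (sval asg (Ands ?E)) \<longleftrightarrow> (\<forall>t\<in>tups R. \<forall>i<?n. asg (fr t i) = vfun asg S \<theta> t i)"
  proof -
    have a: "(\<forall>e\<in>?E. holds (sval asg e)) \<longleftrightarrow> (\<forall>t\<in>tups R. \<forall>i<?n.
       holds (sval asg (Eq (Var (fr t i)) (Ite (subst t \<theta>) (subst t (S ! i)) (t ! i)))))"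
      by blast
    have b: "holds (sval asg (Eq (Var (fr t i)) (Ite (subst t \<theta>) (subst t (S ! i)) (t ! i))))
       \<longleftrightarrow> asg (fr t i) = vfun asg S \<theta> t i" if "i < ?n" for t i
      unfolding vfun_def using eval_subst[OF vt] eval_subst[OF vS[OF that]]
      by (simp add: holds_def)
    show ?thesis unfolding holds_Ands[OF fin] a using b by blast
  qed
  then show ?thesis unfolding upd_vc_def Let_def by (simp add: holds_def)
qed

lemma upd_inst:
  assumes wf: "wf_vctable (length S) R" and fc: "fresh_choice (length S) R fr"
    and eqs: "\<forall>t\<in>tups R. \<forall>i<length S. asg (fr t i) = vfun asg S \<theta> t i"
  shows "inst asg (upd_vc fr S \<theta> R) = gfun S \<theta> ` inst asg R"
proof -
  let ?n = "length S"
  have inj: "inj_on (newt ?n fr) (tups R)" using newt_inj[OF wf fc] .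
  have lc: "lcond (upd_vc fr S \<theta> R) (newt ?n fr t) = lcond R t" if "t \<in> tups R" for t
  proof -
    have "(SOME t'. t' \<in> tups R \<and> newt ?n fr t' = newt ?n fr t) = t"
      using inj that by (intro some_equality) (auto dest: inj_onD)
    then show ?thesis using that unfolding upd_vc_def Let_def by auto
  qed
  have mv: "map (sval asg) (newt ?n fr t) = gfun S \<theta> (map (sval asg) t)" if "t \<in> tups R" for t
  proof -
    have lt: "length t = ?n" using wf that unfolding wf_vctable_def by auto
    have "map (sval asg) (newt ?n fr t) = map (\<lambda>i. vfun asg S \<theta> t i) [0..<?n]"
      unfolding newt_def using eqs that by auto
    also have "\<dots> = gfun S \<theta> (map (sval asg) t)"
      unfolding vfun_def gfun_def using lt by (auto intro: nth_equalityI)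
    finally show ?thesis .
  qed
  have "inst asg (upd_vc fr S \<theta> R) =
     {map (sval asg) (newt ?n fr t) | t. t \<in> tups R \<and> holds (sval asg (lcond R t))}"
  proof
    show "inst asg (upd_vc fr S \<theta> R) \<subseteq> {map (sval asg) (newt ?n fr t) | t. t \<in> tups R \<and> holds (sval asg (lcond R t))}"
    proof
      fix x assume "x \<in> inst asg (upd_vc fr S \<theta> R)"
      then obtain s where s: "s \<in> tups (upd_vc fr S \<theta> R)" "x = map (sval asg) s"
        "holds (sval asg (lcond (upd_vc fr S \<theta> R) s))" unfolding inst_def by blast
      from s(1) obtain t where t: "t \<in> tups R" "s = newt ?n fr t" unfolding upd_vc_def Let_def by auto
      show "x \<in> {map (sval asg) (newt ?n fr t) | t. t \<in> tups R \<and> holds (sval asg (lcond R t))}"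
        using s t lc[OF t(1)] by auto
    qed
  next
    show "{map (sval asg) (newt ?n fr t) | t. t \<in> tups R \<and> holds (sval asg (lcond R t))} \<subseteq> inst asg (upd_vc fr S \<theta> R)"
    proof
      fix x assume "x \<in> {map (sval asg) (newt ?n fr t) | t. t \<in> tups R \<and> holds (sval asg (lcond R t))}"
      then obtain t where t: "t \<in> tups R" "x = map (sval asg) (newt ?n fr t)" "holds (sval asg (lcond R t))" by blast
      have "newt ?n fr t \<in> tups (upd_vc fr S \<theta> R)" using t unfolding upd_vc_def Let_def by auto
      then show "x \<in> inst asg (upd_vc fr S \<theta> R)" unfolding inst_def using t lc[OF t(1)] by auto
    qed
  qed
  also have "\<dots> = (\<lambda>t. map (sval asg) (newt ?n fr t)) ` {t. t \<in> tups R \<and> holds (sval asg (lcond R t))}"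
    by blast
  also have "\<dots> = (\<lambda>t. gfun S \<theta> (map (sval asg) t)) ` {t. t \<in> tups R \<and> holds (sval asg (lcond R t))}"
    using mv by (intro image_cong) auto
  also have "\<dots> = gfun S \<theta> ` ((map (sval asg)) ` {t. t \<in> tups R \<and> holds (sval asg (lcond R t))})"
    by (simp add: image_image)
  also have "\<dots> = gfun S \<theta> ` inst asg R"
    unfolding inst_def by (intro arg_cong[where f="image (gfun S \<theta>)"]) blast
  finally show ?thesis .
qed


lemma upd_case:
  assumes wf: "wf_vctable (length S) R" and ws: "wf_stmt (length S) (Upd S \<theta>)"
    and fc: "fresh_choice (length S) R fr"
  shows "Mod (upd_vc fr S \<theta> R) = apply_rel (Upd S \<theta>) ` Mod R"
proof
  show "Mod (upd_vc fr S \<theta> R) \<subseteq> apply_rel (Upd S \<theta>) ` Mod R"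
  proof
    fix D assume "D \<in> Mod (upd_vc fr S \<theta> R)"
    then obtain asg where a: "inst asg (upd_vc fr S \<theta> R) = D" "holds (sval asg (gcond (upd_vc fr S \<theta> R)))"
      unfolding Mod_def by blast
    from a(2) have g: "holds (sval asg (gcond R))"
      and eqs: "\<forall>t\<in>tups R. \<forall>i<length S. asg (fr t i) = vfun asg S \<theta> t i"
      using upd_gcond[OF wf ws] by auto
    have "D = apply_rel (Upd S \<theta>) (inst asg R)"
      using a(1) upd_inst[OF wf fc eqs] apply_rel_upd by simp
    moreover have "inst asg R \<in> Mod R" unfolding Mod_def using g by blast
    ultimately show "D \<in> apply_rel (Upd S \<theta>) ` Mod R" by blast
  qed
next
  show "apply_rel (Upd S \<theta>) ` Mod R \<subseteq> Mod (upd_vc fr S \<theta> R)"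
  proof
    fix D assume "D \<in> apply_rel (Upd S \<theta>) ` Mod R"
    then obtain asg where a: "D = apply_rel (Upd S \<theta>) (inst asg R)" "holds (sval asg (gcond R))"
      unfolding Mod_def by blast
    let ?n = "length S"
    let ?P = "tups R \<times> {..<?n}"
    define F where "F = (\<lambda>(t,i). fr t i) ` ?P"
    define asg' where "asg' x = (if x \<in> F then
        vfun asg S \<theta> (fst (SOME p. p \<in> ?P \<and> fr (fst p) (snd p) = x)) (snd (SOME p. p \<in> ?P \<and> fr (fst p) (snd p) = x))
        else asg x)" for x
    have inj: "inj_on (\<lambda>(t, i). fr t i) ?P" and fresh: "\<forall>t\<in>tups R. \<forall>i<?n. fr t i \<notin> vars_table R"
      using fc unfolding fresh_choice_def by auto
    have agree: "asg' x = asg x" if "x \<in> vars_table R" for x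
    proof -
      have "x \<notin> F" using that fresh unfolding F_def by auto
      then show ?thesis unfolding asg'_def by simp
    qed
    have ev: "sval asg' e = sval asg e" if "vars e \<subseteq> vars_table R" for e
      using that agree by (intro eval_cong) auto
    have mt: "map (sval asg') t = map (sval asg) t" if "t \<in> tups R" for t
    proof -
      have "vars e \<subseteq> vars_table R" if "e \<in> set t" for e
        using that \<open>t \<in> tups R\<close> unfolding vars_table_def by blast
      then show ?thesis using ev by auto
    qed
    have lcv: "sval asg' (lcond R t) = sval asg (lcond R t)" if "t \<in> tups R" for t
      using that ev unfolding vars_table_def by blast
    have inst_eq: "inst asg' R = inst asg R"
      unfolding inst_def using mt lcv by (metis (no_types, lifting))
    have "vars (gcond R) \<subseteq> vars_table R" unfolding vars_table_def by blast
    then have "sval asg' (gcond R) = sval asg (gcond R)" by (rule ev)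
    with a(2) have g': "holds (sval asg' (gcond R))" by simp
    have vf: "vfun asg' S \<theta> t i = vfun asg S \<theta> t i" if "t \<in> tups R" "i < ?n" for t i
    proof -
      have lt: "length t = ?n" using wf that unfolding wf_vctable_def by auto
      have "vars (t ! i) \<subseteq> vars_table R"
      proof -
        have "t ! i \<in> set t" using that lt by simp
        then show ?thesis using that(1) unfolding vars_table_def by blast
      qed
      then have e: "sval asg' (t ! i) = sval asg (t ! i)" by (rule ev)
      show ?thesis by (simp only: vfun_def mt[OF that(1)] e)
    qed
    have eqs: "\<forall>t\<in>tups R. \<forall>i<?n. asg' (fr t i) = vfun asg' S \<theta> t i"
    proof (intro ballI allI impI)
      fix t i assume ti: "t \<in> tups R" "i < ?n"
      have inF: "fr t i \<in> F" unfolding F_def using ti by force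
      have ex: "\<exists>p. p \<in> ?P \<and> fr (fst p) (snd p) = fr t i" using ti by (intro exI[of _ "(t,i)"]) auto
      define p where "p = (SOME p. p \<in> ?P \<and> fr (fst p) (snd p) = fr t i)"
      have p: "p \<in> ?P \<and> fr (fst p) (snd p) = fr t i" unfolding p_def by (rule someI_ex[OF ex])
      have pe: "(\<lambda>(t, i). fr t i) p = (\<lambda>(t, i). fr t i) (t, i)" using p by (cases p) simp
      have "p = (t, i)" by (rule inj_onD[OF inj pe]) (use p ti in auto)
      have "asg' (fr t i) = vfun asg S \<theta> (fst p) (snd p)"
        unfolding asg'_def p_def[symmetric] by (simp only: inF if_True)
      with \<open>p = (t, i)\<close> have "asg' (fr t i) = vfun asg S \<theta> t i" by simp
      then show "asg' (fr t i) = vfun asg' S \<theta> t i" using vf ti by simp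
    qed
    have "holds (sval asg' (gcond (upd_vc fr S \<theta> R)))"
      using upd_gcond[OF wf ws] g' eqs by auto
    moreover have "inst asg' (upd_vc fr S \<theta> R) = D"
      unfolding upd_inst[OF wf fc eqs] inst_eq a(1) apply_rel_upd ..
    ultimately show "D \<in> Mod (upd_vc fr S \<theta> R)" unfolding Mod_def by blast
  qed
qed

theorem mainTheorem2:
  fixes n :: nat and R :: vctable and u :: stmt and fr :: "expr list \<Rightarrow> nat \<Rightarrow> var"
  assumes "wf_vctable n R"
    and "wf_stmt n u"
    and "\<forall>S \<theta>. u = Upd S \<theta> \<longrightarrow> fresh_choice n R fr"
  shows "Mod (apply_vc fr u R) = apply_rel u ` Mod R"
proof (cases u)
  case (Upd S \<theta>)
  then have n: "n = length S" using assms(2) unfolding wf_stmt_def by simp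
  have fc: "fresh_choice n R fr" using assms(3) Upd by simp
  have "Mod (upd_vc fr S \<theta> R) = apply_rel (Upd S \<theta>) ` Mod R"
    by (rule upd_case) (use assms(1,2) fc n Upd in auto)
  then show ?thesis using Upd by simp
next
  case (Del \<theta>)
  then show ?thesis using del_case assms(2) unfolding wf_stmt_def by simp
next
  case (Ins c)
  then show ?thesis using ins_case by simp
qed

end
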